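(* Let $q>0$ be a constant and let $y$ be a (twice differentiable) solution on $[0,\infty)$ of $$y''(x)+q^2x\,y(x)=u(x).$$ Then there are constants $c_1,c_2$ such that for every $x\ge0$ for which the integral below exists, $$y(x)=\sqrt x\left(c_1J_{-1/3}\!\left(\tfrac{2qx^{3/2}}{3}\right)+c_2J_{1/3}\!\left(\tfrac{2qx^{3/2}}{3}\right)\right)+\theta\,q^{-1}x^{-1/4}\int_0^x|u(t)|\,t^{-1/4}\,dt,$$ for some $\theta=\theta(x)$ with $|\theta|\le1$.
   Context: $J_{\pm1/3}$ are Bessel functions of the first kind of orders $\pm\frac13$. The letter $\theta$ denotes a quantity with $|\theta|\le1$. *)

theory Defs
  imports "HOL-Analysis.Analysis"
begin

definition bessel_J :: "real \<Rightarrow> real \<Rightarrow> real" where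
  "bessel_J \<nu> z =
     (\<Sum>m. (-1) ^ m / (fact m * Gamma (real m + \<nu> + 1)) * (z / 2) powr (2 * real m + \<nu>))"

end

theory Submission
  imports Defs
begin


definition nu :: "nat \<Rightarrow> real" where "nu r = (2 * real r - 1) / 3"

definition coef :: "real \<Rightarrow> nat \<Rightarrow> nat \<Rightarrow> real" where
  "coef q r m = (-1) ^ m / (fact m * Gamma (real m + nu r + 1)) * (q / 3) powr (2 * real m + nu r)"

definition cc :: "real \<Rightarrow> nat \<Rightarrow> nat \<Rightarrow> real" where
  "cc q r n = (if n mod 3 = r then coef q r (n div 3) else 0)"

lemma coef_rec:
  assumes q: "q > 0" and r: "r \<le> 1"
  shows "coef q r (Suc m) = - q\<^sup>2 * coef q r m / ((3 * real m + real r + 3) * (3 * real m + real r + 2))"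
proof -
  have nu0: "real m + nu r + 1 > 0" using r by (cases r) (auto simp: nu_def)
  have G: "Gamma (real (Suc m) + nu r + 1) = (real m + nu r + 1) * Gamma (real m + nu r + 1)"
  proof -
    have "real (Suc m) + nu r + 1 = (real m + nu r + 1) + 1" by simp
    moreover have "real m + nu r + 1 \<notin> \<int>\<^sub>\<le>\<^sub>0" using nu0 nonpos_Ints_nonpos by fastforce
    ultimately show ?thesis using Gamma_plus1 by metis
  qed
  have P: "(q/3) powr (2 * real (Suc m) + nu r) = (q/3)\<^sup>2 * (q/3) powr (2 * real m + nu r)"
  proof -
    have "(q/3) powr (2 * real (Suc m) + nu r) = (q/3) powr (2 + (2 * real m + nu r))" by (simp add: algebra_simps)
    also have "\<dots> = (q/3) powr 2 * (q/3) powr (2 * real m + nu r)" by (rule powr_add)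
    finally show ?thesis using q by (simp add: powr_realpow')
  qed
  have Gp: "Gamma (real m + nu r + 1) > 0" using nu0 by simp
  have den: "(3 * real m + real r + 3) * (3 * real m + real r + 2) = 9 * ((real m + 1) * (real m + nu r + 1))"
    using r by (cases r) (auto simp: nu_def algebra_simps)
  show ?thesis
    unfolding coef_def G P den using Gp nu0
    by (simp add: field_simps power2_eq_square)
qed


lemma coef_summable:
  assumes q: "q > 0" and r: "r \<le> 1"
  shows "summable (\<lambda>m. coef q r m * s ^ m)"
proof (rule summable_ratio_test[where c = "1/2" and N = "nat \<lceil>2 * q\<^sup>2 * \<bar>s\<bar>\<rceil>"])
  fix m assume m: "m \<ge> nat \<lceil>2 * q\<^sup>2 * \<bar>s\<bar>\<rceil>"
  define D where "D = (3 * real m + real r + 3) * (3 * real m + real r + 2)"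
  have D1: "D \<ge> 2 * q\<^sup>2 * \<bar>s\<bar>"
  proof -
    have "2 * q\<^sup>2 * \<bar>s\<bar> \<le> real m" using m by linarith
    also have "\<dots> \<le> D" unfolding D_def by (simp add: algebra_simps)
    finally show ?thesis .
  qed
  have Dp: "D > 0" unfolding D_def by (simp add: add_pos_nonneg)
  have "norm (coef q r (Suc m) * s ^ Suc m) = (q\<^sup>2 * \<bar>s\<bar> / D) * norm (coef q r m * s ^ m)"
    unfolding coef_rec[OF q r] D_def[symmetric] using Dp
    by (simp add: abs_mult abs_divide power_abs field_simps)
  also have "\<dots> \<le> (1/2) * norm (coef q r m * s ^ m)"
    by (rule mult_right_mono) (use D1 Dp in \<open>auto simp: field_simps\<close>)
  finally show "norm (coef q r (Suc m) * s ^ Suc m) \<le> (1/2) * norm (coef q r m * s ^ m)" .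
qed simp

lemma cc_sums_iff:
  assumes r: "r \<le> 1"
  shows "(\<lambda>n. cc q r n * x ^ n) sums S \<longleftrightarrow> (\<lambda>m. coef q r m * x ^ (3 * m + r)) sums S"
proof -
  have sm: "strict_mono (\<lambda>m::nat. 3 * m + r)" by (rule strict_monoI) simp
  have z: "cc q r n * x ^ n = 0" if "n \<notin> range (\<lambda>m. 3 * m + r)" for n
  proof -
    have "n mod 3 \<noteq> r"
    proof
      assume "n mod 3 = r"
      then have "n = 3 * (n div 3) + r" by (metis div_mult_mod_eq mult.commute)
      with that show False by blast
    qed
    then show ?thesis by (simp add: cc_def)
  qed
  have e: "(\<lambda>m. cc q r (3 * m + r) * x ^ (3 * m + r)) = (\<lambda>m. coef q r m * x ^ (3 * m + r))"
    using r by (auto simp: cc_def)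
  show ?thesis using sums_mono_reindex[OF sm, of "\<lambda>n. cc q r n * x ^ n" S] z e by simp
qed

lemma cc_summable:
  assumes q: "q > 0" and r: "r \<le> 1"
  shows "summable (\<lambda>n. cc q r n * x ^ n)"
proof -
  have "summable (\<lambda>m. x ^ r * (coef q r m * (x ^ 3) ^ m))"
    by (rule summable_mult[OF coef_summable[OF q r]])
  moreover have "(\<lambda>m. x ^ r * (coef q r m * (x ^ 3) ^ m)) = (\<lambda>m. coef q r m * x ^ (3 * m + r))"
    by (auto simp: power_add power_mult[symmetric] mult.commute mult.left_commute)
  ultimately have "summable (\<lambda>m. coef q r m * x ^ (3 * m + r))" by simp
  then show ?thesis using cc_sums_iff[OF r] unfolding summable_def by blast
qed


lemma powser_ode:
  fixes c :: "nat \<Rightarrow> real"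
  assumes summ: "\<And>y. summable (\<lambda>n. c n * y ^ n)"
    and c2: "c 2 = 0"
    and rec: "\<And>n. (real n + 3) * (real n + 2) * c (n + 3) = - q\<^sup>2 * c n"
  shows "(\<Sum>n. diffs (diffs c) n * x ^ n) + q\<^sup>2 * x * (\<Sum>n. c n * x ^ n) = 0"
proof -
  define d where "d = diffs (diffs c)"
  have sd: "summable (\<lambda>n. d n * x ^ n)"
    unfolding d_def by (intro termdiff_converges_all summ)
  have d0: "d 0 = 0" using c2 by (simp add: d_def diffs_def numeral_2_eq_2)
  have dS: "d (Suc n) = - q\<^sup>2 * c n" for n
  proof -
    have "d (Suc n) = (real n + 2) * ((real n + 3) * c (n + 3))"
      by (simp add: d_def diffs_def eval_nat_numeral add.commute)
    also have "\<dots> = - q\<^sup>2 * c n" using rec[of n] by (simp add: algebra_simps)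
    finally show ?thesis .
  qed
  have "(\<Sum>n. d (Suc n) * x ^ Suc n) = (\<Sum>n. d n * x ^ n) - d 0 * x ^ 0"
    using suminf_split_head[of "\<lambda>n. d n * x ^ n"] sd by simp
  then have "(\<Sum>n. d n * x ^ n) = (\<Sum>n. (- q\<^sup>2 * x) * (c n * x ^ n))"
    using d0 by (simp add: dS algebra_simps)
  also have "\<dots> = (- q\<^sup>2 * x) * (\<Sum>n. c n * x ^ n)"
    by (rule suminf_mult[OF summ])
  finally show ?thesis unfolding d_def by simp
qed


lemma cc_rec:
  assumes q: "q > 0" and r: "r \<le> 1"
  shows "(real n + 3) * (real n + 2) * cc q r (n + 3) = - q\<^sup>2 * cc q r n"
proof (cases "n mod 3 = r")
  case True
  define m where "m = n div 3"
  have n: "n = 3 * m + r" using True unfolding m_def by (metis div_mult_mod_eq mult.commute)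
  have "(n + 3) div 3 = Suc m" "(n + 3) mod 3 = r" using True by (auto simp: m_def)
  then have "cc q r (n + 3) = coef q r (Suc m)" by (simp add: cc_def)
  moreover have "cc q r n = coef q r m" using True by (simp add: cc_def m_def)
  moreover have "(3 * real m + real r + 3) * (3 * real m + real r + 2) \<noteq> 0"
    by (simp add: add_pos_nonneg)
  ultimately show ?thesis unfolding coef_rec[OF q r] n by (simp add: field_simps)
next
  case False
  then have "(n + 3) mod 3 \<noteq> r" by simp
  with False show ?thesis by (simp add: cc_def)
qed

lemma cc_2: "r \<le> 1 \<Longrightarrow> cc q r 2 = 0" by (simp add: cc_def)

lemma bessel_term:
  assumes x: "x > 0" and q: "q > 0" and r: "r \<le> 1"
  shows "(-1) ^ m / (fact m * Gamma (real m + nu r + 1)) * (2 * q * x powr (3/2) / 3 / 2) powr (2 * real m + nu r)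
     = coef q r m * x ^ (3 * m + r) / sqrt x"
proof -
  have "(2 * q * x powr (3/2) / 3 / 2) powr (2 * real m + nu r) = (q/3) powr (2 * real m + nu r) * (x powr (3/2)) powr (2 * real m + nu r)"
    using q x by (simp add: powr_mult[symmetric])
  also have "(x powr (3/2)) powr (2 * real m + nu r) = x powr (real (3 * m + r) - 1/2)"
  proof -
    have "3/2 * (2 * real m + nu r) = real (3 * m + r) - 1/2" by (simp add: nu_def field_simps)
    then show ?thesis by (metis powr_powr)
  qed
  also have "\<dots> = x powr real (3 * m + r) / x powr (1/2)" by (rule powr_diff)
  also have "\<dots> = x ^ (3 * m + r) / sqrt x"
    by (subst powr_realpow[OF x]) (simp add: powr_half_sqrt x less_imp_le)
  finally show ?thesis by (simp add: coef_def)
qed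

lemma bessel_eq:
  assumes x: "x > 0" and q: "q > 0" and r: "r \<le> 1"
  shows "sqrt x * bessel_J (nu r) (2 * q * x powr (3/2) / 3) = (\<Sum>n. cc q r n * x ^ n)"
proof -
  have "(\<lambda>n. cc q r n * x ^ n) sums (\<Sum>n. cc q r n * x ^ n)"
    using cc_summable[OF q r] by (rule summable_sums)
  then have "(\<lambda>m. coef q r m * x ^ (3 * m + r)) sums (\<Sum>n. cc q r n * x ^ n)"
    using cc_sums_iff[OF r] by blast
  then have "(\<lambda>m. coef q r m * x ^ (3 * m + r) / sqrt x) sums ((\<Sum>n. cc q r n * x ^ n) / sqrt x)"
    by (rule sums_divide)
  then have "bessel_J (nu r) (2 * q * x powr (3/2) / 3) = (\<Sum>n. cc q r n * x ^ n) / sqrt x"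
    unfolding bessel_J_def bessel_term[OF x q r] by (rule sums_unique[symmetric])
  then show ?thesis using x by simp
qed



lemma sq_ident: "(P::real) > 0 \<Longrightarrow> a^2 / P + b * a / (2 * P^3) + 3 * b^2 / (8 * P^5)
        = ((a + b / (4 * P^2))^2 + 5 / 16 * (b / P^2)^2) / P"
  by (simp add: field_simps power2_eq_square) algebra

lemma kernel_bound:
  fixes w w1 :: "real \<Rightarrow> real"
  assumes q: "q > 0"
    and dw: "\<And>s. (w has_real_derivative w1 s) (at s)"
    and dw1: "\<And>s. (w1 has_real_derivative (- q\<^sup>2 * s * w s)) (at s)"
    and t: "0 < t" "t \<le> x" and wt: "w t = 0" and w1t: "w1 t = 1"
  shows "\<bar>w x\<bar> \<le> (1/q) * x powr (-1/4) * t powr (-1/4)"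
proof -
  define W where "W = (\<lambda>P. w (P^2))"
  define V where "V = (\<lambda>P. w1 (P^2))"
  have dW: "(W has_real_derivative (V P * (2 * P))) (at P)" for P
    unfolding W_def V_def
    by (rule DERIV_chain2[OF dw]) (auto intro!: derivative_eq_intros)
  have dV: "(V has_real_derivative ((- q\<^sup>2 * P^2 * W P) * (2 * P))) (at P)" for P
    unfolding W_def V_def
    by (rule DERIV_chain2[OF dw1]) (auto intro!: derivative_eq_intros)
  define \<psi> where "\<psi> = (\<lambda>P. q\<^sup>2 * P * (W P)^2 + (V P)^2 / P + W P * V P / (2 * P^3) + 3 * (W P)^2 / (8 * P^5))"
  have dW': "(W has_real_derivative D) (at P)" if "D = V P * (2 * P)" for D P
    using dW that by simp
  have dV': "(V has_real_derivative D) (at P)" if "D = (- q\<^sup>2 * P^2 * W P) * (2 * P)" for D P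
    using dV that by simp
  have d\<psi>: "(\<psi> has_real_derivative (- 15 / 8 * (W P)^2 / P^6)) (at P)" if P: "P > 0" for P
    unfolding \<psi>_def
    apply (rule derivative_eq_intros dW' dV' refl | (use P in simp; fail))+
    using P apply (simp_all)
    apply (simp add: field_simps)
    apply (simp add: algebra_simps power2_eq_square eval_nat_numeral)
    done
  have st: "sqrt t > 0" "sqrt t \<le> sqrt x" using t by auto
  have mono: "\<psi> (sqrt x) \<le> \<psi> (sqrt t)"
  proof (rule DERIV_nonpos_imp_nonincreasing[OF st(2)])
    fix P assume "sqrt t \<le> P" "P \<le> sqrt x"
    then have "P > 0" using st by linarith
    then have "DERIV \<psi> P :> (- 15 / 8 * (W P)^2 / P^6)" by (rule d\<psi>)
    moreover have "- 15 / 8 * (W P)^2 / P^6 \<le> 0" by (simp add: divide_nonpos_nonneg)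
    ultimately show "\<exists>y. DERIV \<psi> P :> y \<and> y \<le> 0" by blast
  qed
  have Wt: "W (sqrt t) = 0" "V (sqrt t) = 1" using t wt w1t by (auto simp: W_def V_def)
  have Wx: "W (sqrt x) = w x" using t by (simp add: W_def)
  have \<psi>t: "\<psi> (sqrt t) = 1 / sqrt t" using Wt by (simp add: \<psi>_def)
  have sx: "sqrt x > 0" using st by linarith
  have rest: "(V P)^2 / P + W P * V P / (2 * P^3) + 3 * (W P)^2 / (8 * P^5) \<ge> 0" if P: "P > 0" for P
  proof -
    have "(V P)^2 / P + W P * V P / (2 * P^3) + 3 * (W P)^2 / (8 * P^5)
        = ((V P + W P / (4 * P^2))^2 + 5 / 16 * (W P / P^2)^2) / P"
      by (rule sq_ident[OF P])
    also have "\<dots> \<ge> 0" using P by (intro divide_nonneg_pos add_nonneg_nonneg) auto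
    finally show ?thesis .
  qed
  have "q\<^sup>2 * sqrt x * (w x)^2 \<le> \<psi> (sqrt x)"
    using rest[OF sx] unfolding \<psi>_def Wx by linarith
  also have "\<dots> \<le> 1 / sqrt t" using mono \<psi>t by simp
  finally have ineq: "q\<^sup>2 * sqrt x * (w x)^2 \<le> 1 / sqrt t" .
  define B where "B = (1/q) * x powr (-1/4) * t powr (-1/4)"
  have pw: "(a powr (-1/4))^2 = 1 / sqrt a" if "a > 0" for a :: real
  proof -
    have "(a powr (-1/4))^2 = a powr (-1/4) * a powr (-1/4)" by (rule power2_eq_square)
    also have "\<dots> = a powr (-1/4 + -1/4)" by (rule powr_add[symmetric])
    also have "-1/4 + -1/4 = - (1/2::real)" by simp
    also have "a powr (- (1/2)) = inverse (a powr (1/2))" by (rule powr_minus)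
    also have "\<dots> = 1 / sqrt a" using that by (simp add: powr_half_sqrt inverse_eq_divide)
    finally show ?thesis .
  qed
  have B2: "B^2 = 1 / (q\<^sup>2 * sqrt x * sqrt t)"
    unfolding B_def using t pw[of x] pw[of t] by (simp add: power_mult_distrib power_divide)
  have "(w x)^2 \<le> B^2"
  proof -
    have pos: "q\<^sup>2 * sqrt x > 0" using q sx by simp
    have "(w x)^2 = (q\<^sup>2 * sqrt x * (w x)^2) / (q\<^sup>2 * sqrt x)" using pos by (simp only: nonzero_mult_div_cancel_left less_irrefl)
    also have "\<dots> \<le> (1 / sqrt t) / (q\<^sup>2 * sqrt x)" using ineq pos by (intro divide_right_mono) (simp_all add: less_imp_le)
    also have "\<dots> = 1 / (q\<^sup>2 * sqrt x * sqrt t)" by simp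
    finally show ?thesis unfolding B2 .
  qed
  then have "\<bar>w x\<bar> \<le> \<bar>B\<bar>" by (simp add: abs_le_square_iff)
  also have "\<bar>B\<bar> = B" unfolding B_def using q by simp
  finally show ?thesis unfolding B_def .
qed



definition S0 :: "real \<Rightarrow> nat \<Rightarrow> real \<Rightarrow> real" where "S0 q r x = (\<Sum>n. cc q r n * x ^ n)"
definition S1 :: "real \<Rightarrow> nat \<Rightarrow> real \<Rightarrow> real" where "S1 q r x = (\<Sum>n. diffs (cc q r) n * x ^ n)"
definition S2 :: "real \<Rightarrow> nat \<Rightarrow> real \<Rightarrow> real" where "S2 q r x = (\<Sum>n. diffs (diffs (cc q r)) n * x ^ n)"

lemma S_facts:
  assumes q: "q > 0" and r: "r \<le> 1"
  shows "(S0 q r has_real_derivative S1 q r x) (at x)"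
    and "(S1 q r has_real_derivative S2 q r x) (at x)"
    and "S2 q r x = - q\<^sup>2 * x * S0 q r x"
proof -
  have s0: "\<And>y. summable (\<lambda>n. cc q r n * y ^ n)" using cc_summable[OF q r] .
  have s1: "\<And>y. summable (\<lambda>n. diffs (cc q r) n * y ^ n)" by (rule termdiff_converges_all[OF s0])
  show "(S0 q r has_real_derivative S1 q r x) (at x)"
    unfolding S0_def[abs_def] S1_def by (rule termdiffs_strong_converges_everywhere[OF s0])
  show "(S1 q r has_real_derivative S2 q r x) (at x)"
    unfolding S1_def[abs_def] S2_def by (rule termdiffs_strong_converges_everywhere[OF s1])
  have "S2 q r x + q\<^sup>2 * x * S0 q r x = 0"
    unfolding S2_def S0_def by (rule powser_ode[OF s0 cc_2[OF r] cc_rec[OF q r]])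
  then show "S2 q r x = - q\<^sup>2 * x * S0 q r x" by simp
qed

lemma coef0_pos: "q > 0 \<Longrightarrow> r \<le> 1 \<Longrightarrow> coef q r 0 > 0"
  by (cases r) (auto simp: coef_def nu_def)

lemma S_init:
  shows "S0 q 0 0 = coef q 0 0" "S1 q 0 0 = 0" "S0 q 1 0 = 0" "S1 q 1 0 = coef q 1 0"
  by (simp_all add: S0_def S1_def cc_def diffs_def)


theorem mainTheorem10:
  fixes q :: real and y y' y'' u :: "real \<Rightarrow> real"
  assumes q_pos: "q > 0"
    and d1: "\<And>x. x \<ge> 0 \<Longrightarrow> (y has_real_derivative y' x) (at x within {0..})"
    and d2: "\<And>x. x \<ge> 0 \<Longrightarrow> (y' has_real_derivative y'' x) (at x within {0..})"
    and ode: "\<And>x. x \<ge> 0 \<Longrightarrow> y'' x + q\<^sup>2 * x * y x = u x"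
  shows "\<exists>c1 c2 :: real. \<forall>x > 0.
           (\<lambda>t. \<bar>u t\<bar> * t powr (-1/4)) integrable_on {0..x} \<longrightarrow>
           (\<exists>\<theta>. \<bar>\<theta>\<bar> \<le> 1 \<and>
              y x = sqrt x * (c1 * bessel_J (-1/3) (2 * q * x powr (3/2) / 3)
                            + c2 * bessel_J (1/3) (2 * q * x powr (3/2) / 3))
                    + \<theta> * (1 / q) * x powr (-1/4)
                        * integral {0..x} (\<lambda>t. \<bar>u t\<bar> * t powr (-1/4)))"
proof -
  note q = q_pos
  define f1 where "f1 = S0 q 0"
  define f1' where "f1' = S1 q 0"
  define f2 where "f2 = S0 q 1"
  define f2' where "f2' = S1 q 1"
  define A where "A = coef q 0 0"
  define B where "B = coef q 1 0"
  have A: "A > 0" unfolding A_def using coef0_pos[OF q] by simp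
  have B: "B > 0" unfolding B_def using coef0_pos[OF q] by simp
  have df1: "\<And>s. (f1 has_real_derivative f1' s) (at s)" unfolding f1_def f1'_def using S_facts[OF q] by simp
  have df2: "\<And>s. (f2 has_real_derivative f2' s) (at s)" unfolding f2_def f2'_def using S_facts[OF q] by simp
  have df1': "\<And>s. (f1' has_real_derivative (- q\<^sup>2 * s * f1 s)) (at s)"
    unfolding f1_def f1'_def using S_facts[OF q, of 0] by simp
  have df2': "\<And>s. (f2' has_real_derivative (- q\<^sup>2 * s * f2 s)) (at s)"
    unfolding f2_def f2'_def using S_facts[OF q, of 1] by simp
  have init: "f1 0 = A" "f1' 0 = 0" "f2 0 = 0" "f2' 0 = B"
    unfolding f1_def f1'_def f2_def f2'_def A_def B_def using S_init by simp_all
  have Wc: "f1 s * f2' s - f1' s * f2 s = A * B" for s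
  proof -
    have "\<forall>s. ((\<lambda>s. f1 s * f2' s - f1' s * f2 s) has_real_derivative 0) (at s)"
    proof
      fix s
      show "((\<lambda>s. f1 s * f2' s - f1' s * f2 s) has_real_derivative 0) (at s)"
        by (rule derivative_eq_intros df1 df2 df1' df2' refl)+ (simp add: algebra_simps)
    qed
    from DERIV_isconst_all[OF this, of s 0] show ?thesis using init by simp
  qed
  define c1 where "c1 = y 0 / A"
  define c2 where "c2 = y' 0 / B"
  show ?thesis
  proof (intro exI allI impI)
    fix x :: real
    assume x: "x > 0" and intg: "(\<lambda>t. \<bar>u t\<bar> * t powr (-1/4)) integrable_on {0..x}"
    define I where "I = integral {0..x} (\<lambda>t. \<bar>u t\<bar> * t powr (-1/4))"
    have I0: "I \<ge> 0" unfolding I_def by (rule integral_nonneg[OF intg]) simp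
    have bes1: "sqrt x * bessel_J (-1/3) (2 * q * x powr (3/2) / 3) = f1 x"
      using bessel_eq[OF x q, of 0] by (simp add: nu_def f1_def S0_def)
    have bes2: "sqrt x * bessel_J (1/3) (2 * q * x powr (3/2) / 3) = f2 x"
      using bessel_eq[OF x q, of 1] by (simp add: nu_def f2_def S0_def)
    define z where "z = (\<lambda>t. y t - c1 * f1 t - c2 * f2 t)"
    define z' where "z' = (\<lambda>t. y' t - c1 * f1' t - c2 * f2' t)"
    define iAB where "iAB = inverse (A * B)"
    define K where "K = (\<lambda>t. iAB * (f1 t * f2 x - f1 x * f2 t))"
    define Kt where "Kt = (\<lambda>t. iAB * (f1' t * f2 x - f1 x * f2' t))"
    define \<phi> where "\<phi> = (\<lambda>t. K t * z' t - Kt t * z t)"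
    have dphi: "(\<phi> has_real_derivative (K t * u t)) (at t within {0..x})" if t: "t \<in> {0..x}" for t
    proof -
      have t0: "t \<ge> 0" using t by simp
      have sub: "{0..x} \<subseteq> {0..}" by auto
      have dy: "(y has_real_derivative y' t) (at t within {0..x})" by (rule DERIV_subset[OF d1[OF t0] sub])
      have dy': "(y' has_real_derivative y'' t) (at t within {0..x})" by (rule DERIV_subset[OF d2[OF t0] sub])
      have wf1: "(f1 has_real_derivative f1' t) (at t within {0..x})" using df1 by (rule has_field_derivative_at_within)
      have wf2: "(f2 has_real_derivative f2' t) (at t within {0..x})" using df2 by (rule has_field_derivative_at_within)
      have wf1': "(f1' has_real_derivative (- q\<^sup>2 * t * f1 t)) (at t within {0..x})" using df1' by (rule has_field_derivative_at_within)
      have wf2': "(f2' has_real_derivative (- q\<^sup>2 * t * f2 t)) (at t within {0..x})" using df2' by (rule has_field_derivative_at_within)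
      have yy: "y'' t = u t - q\<^sup>2 * t * y t" using ode[OF t0] by simp
      show ?thesis
        unfolding \<phi>_def K_def Kt_def z_def z'_def
        apply (rule derivative_eq_intros dy dy' wf1 wf2 wf1' wf2' refl | (simp; fail))+
        unfolding yy by (simp add: algebra_simps)
    qed
    have "((\<lambda>t. K t * u t) has_integral (\<phi> x - \<phi> 0)) {0..x}"
      using x dphi by (intro fundamental_theorem_of_calculus) (auto simp: has_real_derivative_iff_has_vector_derivative[symmetric])
    moreover have "\<phi> x - \<phi> 0 = z x"
    proof -
      have "K x = 0" unfolding K_def by simp
      moreover have "Kt x = -1" unfolding Kt_def iAB_def using Wc[of x] A B by (simp add: field_simps)
      moreover have "z 0 = 0" "z' 0 = 0" unfolding z_def z'_def c1_def c2_def using init A B by auto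
      ultimately show ?thesis unfolding \<phi>_def by simp
    qed
    ultimately have hK: "((\<lambda>t. K t * u t) has_integral z x) {0..x}" by simp
    define h where "h = (\<lambda>t. if t = 0 then 0 else K t * u t)"
    have hh: "(h has_integral z x) {0..x}"
      by (rule has_integral_spike[OF negligible_sing[of 0] _ hK]) (simp add: h_def)
    define M where "M = (1/q) * x powr (-1/4)"
    have M0: "M \<ge> 0" unfolding M_def using q by simp
    have Kb: "\<bar>K t\<bar> \<le> M * t powr (-1/4)" if t: "0 < t" "t \<le> x" for t
    proof -
      define w where "w = (\<lambda>s. iAB * (f1 t * f2 s - f1 s * f2 t))"
      define w1 where "w1 = (\<lambda>s. iAB * (f1 t * f2' s - f1' s * f2 t))"
      have dw: "(w has_real_derivative w1 s) (at s)" for s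
        unfolding w_def w1_def
        by (rule derivative_eq_intros df1 df2 refl | (simp; fail))+
      have dw1: "(w1 has_real_derivative (- q\<^sup>2 * s * w s)) (at s)" for s
        unfolding w_def w1_def
        by (rule derivative_eq_intros df1' df2' refl | (simp; fail))+ (simp add: algebra_simps)
      have wt: "w t = 0" unfolding w_def by simp
      have w1t: "w1 t = 1" unfolding w1_def iAB_def using Wc[of t] A B by (simp add: field_simps)
      have "\<bar>w x\<bar> \<le> (1/q) * x powr (-1/4) * t powr (-1/4)"
        by (rule kernel_bound[OF q dw dw1 t wt w1t])
      then show ?thesis unfolding K_def M_def w_def by simp
    qed
    have "norm (integral {0..x} h) \<le> integral {0..x} (\<lambda>t. M * (\<bar>u t\<bar> * t powr (-1/4)))"
    proof (rule integral_norm_bound_integral)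
      show "h integrable_on {0..x}" using hh by blast
      show "(\<lambda>t. M * (\<bar>u t\<bar> * t powr (-1/4))) integrable_on {0..x}"
        using integrable_on_cmult_left[OF intg, of M] by simp
      fix t assume t: "t \<in> {0..x}"
      show "norm (h t) \<le> M * (\<bar>u t\<bar> * t powr (-1/4))"
      proof (cases "t = 0")
        case True then show ?thesis by (simp add: h_def)
      next
        case False
        then have t': "0 < t" "t \<le> x" using t by auto
        have "norm (h t) = \<bar>K t\<bar> * \<bar>u t\<bar>" using False by (simp add: h_def abs_mult)
        also have "\<dots> \<le> M * t powr (-1/4) * \<bar>u t\<bar>" by (rule mult_right_mono[OF Kb[OF t']]) simp
        finally show ?thesis by (simp add: mult_ac)
      qed
    qed
    then have zb: "\<bar>z x\<bar> \<le> M * I" using integral_unique[OF hh] unfolding I_def by simp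
    define \<theta> where "\<theta> = (if M * I = 0 then 0 else z x / (M * I))"
    have MI: "M * I \<ge> 0" using M0 I0 by simp
    show "\<bar>\<theta>\<bar> \<le> 1 \<and>
              y x = sqrt x * (c1 * bessel_J (-1/3) (2 * q * x powr (3/2) / 3)
                            + c2 * bessel_J (1/3) (2 * q * x powr (3/2) / 3))
                    + \<theta> * (1 / q) * x powr (-1/4)
                        * integral {0..x} (\<lambda>t. \<bar>u t\<bar> * t powr (-1/4))"
    proof
      show "\<bar>\<theta>\<bar> \<le> 1" unfolding \<theta>_def using zb MI M0 I0 by (auto simp: abs_divide divide_le_eq_1 zero_less_mult_iff)
      have "\<theta> * (M * I) = z x" unfolding \<theta>_def using zb MI by auto
      then show "y x = sqrt x * (c1 * bessel_J (-1/3) (2 * q * x powr (3/2) / 3)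
                            + c2 * bessel_J (1/3) (2 * q * x powr (3/2) / 3))
                    + \<theta> * (1 / q) * x powr (-1/4)
                        * integral {0..x} (\<lambda>t. \<bar>u t\<bar> * t powr (-1/4))"
        unfolding distrib_left mult.left_commute[of "sqrt x"] bes1 bes2
        unfolding I_def[symmetric] M_def z_def by (simp add: algebra_simps)
    qed
  qed
qed

end
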